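(* Let $d\ge1$, $k\ge1$ and $p\ge1$ an integer. There are constants $\mu_p,\lambda_p>0$ depending only on $p$ and $d$ such that for all $[\boldsymbol m,\boldsymbol n]\in\mathbb Z^{2d}$, $$\mu_p\big(1+|\boldsymbol x^{k,\boldsymbol m}|^2+|\boldsymbol \xi^{k,\boldsymbol n}|^2\big)^p\le\|\Psi_{k,\boldsymbol m,\boldsymbol n}\|^2_{\widehat H^p_k(\mathbb R^d)}\le\lambda_p\big(1+|\boldsymbol x^{k,\boldsymbol m}|^2+|\boldsymbol \xi^{k,\boldsymbol n}|^2\big)^p.$$
   Context: For $[\boldsymbol m,\boldsymbol n]\in\mathbb Z^{2d}$ set $\boldsymbol x^{k,\boldsymbol m}=\sqrt{\pi/k}\,\boldsymbol m$, $\boldsymbol \xi^{k,\boldsymbol n}=\sqrt{\pi/k}\,\boldsymbol n$ and $\Psi_{k,\boldsymbol m,\boldsymbol n}(\boldsymbol x)=(k/\pi)^{d/4}e^{-\frac k2|\boldsymbol x-\boldsymbol x^{k,\boldsymbol m}|^2}e^{ik(\boldsymbol x-\boldsymbol x^{k,\boldsymbol m})\cdot\boldsymbol \xi^{k,\boldsymbol n}}$. For Schwartz $v$, $\|v\|^2_{\widehat H^p_k(\mathbb R^d)}=\sum_{[\boldsymbol a]\le p}\sum_{q=0}^{p-[\boldsymbol a]}k^{-2[\boldsymbol a]}\||\boldsymbol x|^q\partial^{\boldsymbol a}v\|^2_{L^2(\mathbb R^d)}$, where $[\boldsymbol a]=a_1+\dots+a_d$. *)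

theory Defs
  imports "HOL-Analysis.Analysis" "HOL-Library.Multiset"
begin

text \<open>Points of R^d are vectors real^'n with d = CARD('n); multi-indices are 'n \<Rightarrow> nat.\<close>

definition lattice_pt :: "real \<Rightarrow> int^'n \<Rightarrow> real^'n" where
  "lattice_pt k m = sqrt (pi / k) *\<^sub>R (\<chi> i. real_of_int (m $ i))"

definition Psi :: "real \<Rightarrow> int^'n \<Rightarrow> int^'n \<Rightarrow> real^'n \<Rightarrow> complex" where
  "Psi k m n x =
     complex_of_real ((k / pi) powr (real CARD('n) / 4))
     * complex_of_real (exp (- (k / 2) * (norm (x - lattice_pt k m))\<^sup>2))
     * cis (k * ((x - lattice_pt k m) \<bullet> lattice_pt k n))"

definition pderiv_dir :: "'n::finite \<Rightarrow> (real^'n \<Rightarrow> complex) \<Rightarrow> real^'n \<Rightarrow> complex" where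
  "pderiv_dir i f x = vector_derivative (\<lambda>t::real. f (x + t *\<^sub>R axis i 1)) (at 0)"

definition mi_order :: "('n::finite \<Rightarrow> nat) \<Rightarrow> nat" where
  "mi_order a = (\<Sum>i\<in>UNIV. a i)"

text \<open>multi-index derivative: apply the partial derivatives in direction i exactly a i times
  (in some fixed order; for smooth functions the order is irrelevant)\<close>
definition mi_deriv :: "('n::finite \<Rightarrow> nat) \<Rightarrow> (real^'n \<Rightarrow> complex) \<Rightarrow> real^'n \<Rightarrow> complex" where
  "mi_deriv a f = fold pderiv_dir
      (SOME L. mset L = (\<Sum>i\<in>UNIV. replicate_mset (a i) i)) f"

definition L2_norm_sq :: "(real^'n::finite \<Rightarrow> complex) \<Rightarrow> real" where
  "L2_norm_sq g = (LINT x|lborel. (cmod (g x))\<^sup>2)"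

definition Hhat_norm_sq :: "nat \<Rightarrow> real \<Rightarrow> (real^'n::finite \<Rightarrow> complex) \<Rightarrow> real" where
  "Hhat_norm_sq p k v =
     (\<Sum>a\<in>{a::'n \<Rightarrow> nat. mi_order a \<le> p}. \<Sum>q\<in>{0..p - mi_order a}.
        k powr (- 2 * real (mi_order a))
        * L2_norm_sq (\<lambda>x. complex_of_real (norm x ^ q) * mi_deriv a v x))"

end

theory Submission
  imports Defs "HOL-Probability.Distributions" "HOL-Complex_Analysis.Complex_Analysis"
begin


lemma gauss_nn_finite:
  "(\<integral>\<^sup>+x. ennreal (exp (- (norm x ^ 2) / 2)) \<partial>(lborel::'a::euclidean_space measure)) < \<infinity>"
proof -
  have eq: "ennreal (exp (- (norm x ^ 2) / 2)) = (\<Prod>b\<in>Basis. ennreal (exp (- ((x \<bullet> b)^2) / 2)))" for x :: 'a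
  proof -
    have "(norm x)^2 = x \<bullet> x" by (rule power2_norm_eq_inner)
    also have "\<dots> = (\<Sum>b\<in>Basis. (x \<bullet> b)^2)"
      by (subst euclidean_inner) (simp add: power2_eq_square)
    finally have "(norm x)^2 = (\<Sum>b\<in>Basis. (x \<bullet> b)^2)" .
    then have "exp (- (norm x ^ 2) / 2) = (\<Prod>b\<in>Basis. exp (- ((x \<bullet> b)^2) / 2))"
      by (simp add: exp_sum[symmetric] sum_negf sum_divide_distrib)
    then show ?thesis by (simp add: prod_ennreal)
  qed
  have one: "(\<integral>\<^sup>+t. ennreal (exp (- (t^2) / 2)) \<partial>lborel) = ennreal (sqrt (2*pi))"
  proof -
    have "(\<integral>\<^sup>+t. ennreal (exp (- (t^2) / 2)) \<partial>lborel) = (\<integral>\<^sup>+t. ennreal (sqrt (2*pi) * std_normal_density t) \<partial>lborel)"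
      by (intro nn_integral_cong) (simp add: std_normal_density_def)
    also have "\<dots> = ennreal (sqrt (2*pi)) * (\<integral>\<^sup>+t. ennreal (std_normal_density t) \<partial>lborel)"
      by (simp add: ennreal_mult nn_integral_cmult)
    also have "(\<integral>\<^sup>+t. ennreal (std_normal_density t) \<partial>lborel) = 1"
      by (subst nn_integral_eq_integral) auto
    finally show ?thesis by simp
  qed
  have "(\<integral>\<^sup>+x. ennreal (exp (- (norm x ^ 2) / 2)) \<partial>(lborel::'a measure))
      = (\<integral>\<^sup>+x. (\<Prod>b\<in>(Basis::'a set). ennreal (exp (- ((x \<bullet> b)^2) / 2))) \<partial>lborel)"
    by (intro nn_integral_cong eq)
  also have "\<dots> = (\<Prod>b\<in>(Basis::'a set). (\<integral>\<^sup>+t. ennreal (exp (- (t^2) / 2)) \<partial>lborel))"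
    by (rule nn_integral_lborel_prod) auto
  also have "\<dots> = (\<Prod>b\<in>(Basis::'a set). ennreal (sqrt (2*pi)))" unfolding one by simp
  also have "\<dots> < \<infinity>" by (simp only: prod_constant, subst ennreal_power) auto
  finally show ?thesis .
qed

definition Gf :: "real \<Rightarrow> real \<Rightarrow> complex \<Rightarrow> complex" where
  "Gf k s z = exp (- (of_real k / 2) * z^2 + \<i> * of_real (k * s) * z)"

lemma Gf_hol[holomorphic_intros]: "Gf k s holomorphic_on A"
  unfolding Gf_def by (intro holomorphic_intros)

lemma norm_Gf_real: "norm (Gf k s (of_real u)) = exp (- k * u^2 / 2)"
  unfolding Gf_def norm_exp_eq_Re by (simp add: power2_eq_square)

lemma Gf_circle:
  fixes k r u s :: real
  assumes k: "k \<ge> 1" and r: "r > 0" "r \<le> 1" and kr: "k * r * (1 + \<bar>u\<bar> + \<bar>s\<bar>) \<le> 1"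
    and z: "norm (z - of_real u) = r"
  shows "norm (Gf k s z) \<le> exp 2 * exp (- k * u^2 / 2)"
proof -
  define a b where "a = Re z" and "b = Im z"
  have "sqrt ((a - u)^2 + b^2) = r" using z
    by (simp add: a_def b_def cmod_def)
  then have "(sqrt ((a - u)^2 + b^2))^2 = r^2" by simp
  then have ab: "(a - u)^2 + b^2 = r^2"
    by (subst (asm) real_sqrt_pow2) auto
  have "(a - u)^2 \<le> r^2" using ab by (smt (verit) zero_le_power2)
  then have au: "\<bar>a - u\<bar> \<le> r" using r by (metis abs_le_square_iff abs_of_pos)
  have "b^2 \<le> r^2" using ab by (smt (verit) zero_le_power2)
  then have bb: "\<bar>b\<bar> \<le> r" using r by (metis abs_le_square_iff abs_of_pos)
  have re: "Re (- (of_real k / 2) * z^2 + \<i> * of_real (k * s) * z) = - (k/2) * (a^2 - b^2) - k * s * b"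
    by (simp add: a_def b_def power2_eq_square)
  have kr0: "k * r \<ge> 0" using k r by simp
  have h1: "u * (a - u) \<ge> - (\<bar>u\<bar> * r)"
  proof -
    have "\<bar>u * (a - u)\<bar> \<le> \<bar>u\<bar> * r" unfolding abs_mult by (rule mult_left_mono[OF au]) simp
    then show ?thesis by (rule abs_le_D2[THEN le_imp_neg_le, simplified])
  qed
  have h3: "s * b \<ge> - (\<bar>s\<bar> * r)"
  proof -
    have "\<bar>s * b\<bar> \<le> \<bar>s\<bar> * r" unfolding abs_mult by (rule mult_left_mono[OF bb]) simp
    then show ?thesis by (rule abs_le_D2[THEN le_imp_neg_le, simplified])
  qed
  have h2: "b^2 \<le> r^2" using bb r by (metis abs_le_square_iff abs_of_pos)
  have e1: "a^2 - u^2 = (a-u)^2 + 2*(u*(a-u))" by algebra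
  have krr: "k * r * r \<le> 1"
  proof -
    have "k * r * 1 \<le> k * r * (1 + \<bar>u\<bar> + \<bar>s\<bar>)" by (rule mult_left_mono[OF _ kr0]) simp
    then have "k * r \<le> 1" using kr by simp
    moreover have "k * r * r \<le> k * r * 1" by (rule mult_left_mono[OF _ kr0]) (use r in simp)
    ultimately show ?thesis by simp
  qed
  have krus: "k * r * \<bar>u\<bar> + k * r * \<bar>s\<bar> \<le> 1"
  proof -
    have "k * r * (\<bar>u\<bar> + \<bar>s\<bar>) \<le> k * r * (1 + \<bar>u\<bar> + \<bar>s\<bar>)" by (rule mult_left_mono[OF _ kr0]) simp
    then show ?thesis using kr by (simp add: distrib_left)
  qed
  have t1: "k * (u * (a - u)) \<ge> - (k * r * \<bar>u\<bar>)"
    using mult_left_mono[OF h1, of k] k by (simp add: mult_ac)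
  have t2: "k * (b^2) \<le> k * r * r" using mult_left_mono[OF h2, of k] k by (simp add: mult_ac power2_eq_square)
  have t3: "k * (s * b) \<ge> - (k * r * \<bar>s\<bar>)" using mult_left_mono[OF h3, of k] k by (simp add: mult_ac)
  have t4: "k * ((a-u)^2) \<ge> 0" using k by simp
  have "- (k/2) * (a^2 - b^2) - k * s * b \<le> - k * u^2 / 2 + 2"
  proof -
    have "- (k/2) * (a^2 - b^2) - k * s * b
       = - (k * u^2) / 2 - k * ((a-u)^2) / 2 - k * (u * (a - u)) + k * (b^2) / 2 - k * (s * b)"
      by (simp add: power2_eq_square field_simps)
    also have "\<dots> \<le> - (k * u^2) / 2 + k * r * \<bar>u\<bar> + k * r * r / 2 + k * r * \<bar>s\<bar>"
      using t1 t2 t3 t4 by linarith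
    also have "\<dots> \<le> - (k * u^2) / 2 + 2" using krr krus by simp
    finally show ?thesis by simp
  qed
  then have "Re (- (of_real k / 2) * z^2 + \<i> * of_real (k * s) * z) \<le> 2 + (- k * u^2 / 2)"
    using re by linarith
  then have "norm (Gf k s z) \<le> exp (2 + (- k * u^2 / 2))"
    unfolding Gf_def norm_exp_eq_Re by simp
  also have "exp (2 + (- k * u^2 / 2)) = exp 2 * exp (- k * u^2 / 2)" by (rule exp_add)
  finally show ?thesis .
qed

lemma Gf_deriv_upper:
  fixes k s u :: real
  assumes k: "k \<ge> 1"
  shows "norm ((deriv ^^ j) (Gf k s) (of_real u)) \<le> fact j * exp 2 * exp (- k * u^2 / 2) * (k * (1 + \<bar>u\<bar> + \<bar>s\<bar>)) ^ j"
proof -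
  define r where "r = 1 / (k * (1 + \<bar>u\<bar> + \<bar>s\<bar>))"
  have "k * 1 \<le> k * (1 + \<bar>u\<bar> + \<bar>s\<bar>)" by (rule mult_left_mono) (use k in auto)
  then have pos: "k * (1 + \<bar>u\<bar> + \<bar>s\<bar>) \<ge> 1" using k by linarith
  have r0: "r > 0" and r1: "r \<le> 1" using pos by (auto simp: r_def)
  have kr: "k * r * (1 + \<bar>u\<bar> + \<bar>s\<bar>) \<le> 1" using pos by (simp add: r_def)
  have "norm ((deriv ^^ j) (Gf k s) (of_real u)) \<le> fact j * (exp 2 * exp (- k * u^2 / 2)) / r ^ j"
  proof (rule Cauchy_inequality[OF _ _ r0])
    show "Gf k s holomorphic_on ball (complex_of_real u) r" by (rule Gf_hol)
    show "continuous_on (cball (complex_of_real u) r) (Gf k s)"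
      by (intro holomorphic_on_imp_continuous_on Gf_hol)
    fix x assume "cmod (complex_of_real u - x) = r"
    then have "norm (x - of_real u) = r" by (simp add: norm_minus_commute)
    then show "cmod (Gf k s x) \<le> exp 2 * exp (- k * u\<^sup>2 / 2)"
      by (rule Gf_circle[OF k r0 r1 kr])
  qed
  also have "\<dots> = fact j * exp 2 * exp (- k * u^2 / 2) * (k * (1 + \<bar>u\<bar> + \<bar>s\<bar>)) ^ j"
    by (simp add: r_def power_divide field_simps)
  finally show ?thesis .
qed



lemma exp_lin_hderiv: "(deriv ^^ j) (\<lambda>z. exp (c * z)) = (\<lambda>z. c^j * exp (c * z :: complex))"
proof (induction j)
  case 0 then show ?case by simp
next
  case (Suc j)
  show ?case
  proof
    fix z
    have "((\<lambda>z. c^j * exp (c * z)) has_field_derivative c^(Suc j) * exp (c * z)) (at z)"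
      by (auto intro!: derivative_eq_intros)
    then show "(deriv ^^ Suc j) (\<lambda>z. exp (c * z)) z = c ^ Suc j * exp (c * z)"
      using Suc by (simp add: DERIV_imp_deriv)
  qed
qed

lemma Gf_split: "Gf k s = (\<lambda>z. Gf k 0 z * exp ((\<i> * of_real (k * s)) * z))"
  by (auto simp: Gf_def fun_eq_iff mult_exp_exp algebra_simps)

definition Kc :: "nat \<Rightarrow> real" where
  "Kc p = (\<Sum>i=1..p. real (p choose i) * fact i * exp 2 * 2^i)"

lemma Kc_nonneg: "Kc p \<ge> 0"
  unfolding Kc_def by (intro sum_nonneg) auto

lemma Gf_deriv_lower_aux:
  fixes k s u :: real
  assumes k: "k \<ge> 1"
  shows "norm ((deriv ^^ p) (Gf k s) (of_real u)) \<ge>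
    exp (- k * u^2 / 2) * (k * \<bar>s\<bar>)^p
    - (\<Sum>i=1..p. real (p choose i) * (fact i * exp 2 * exp (- k * u^2 / 2) * (k * (1 + \<bar>u\<bar>))^i) * (k * \<bar>s\<bar>)^(p-i))"
proof -
  define c where "c = \<i> * of_real (k * s)"
  define e where "e = exp (c * of_real u)"
  define T where "T i = of_nat (p choose i) * (deriv ^^ i) (Gf k 0) (of_real u) * (c^(p-i) * e)" for i
  have "(deriv ^^ p) (Gf k s) (of_real u) = (deriv ^^ p) (\<lambda>z. Gf k 0 z * exp (c * z)) (of_real u)"
    by (subst Gf_split) (simp add: c_def)
  also have "\<dots> = (\<Sum>i=0..p. T i)"
    unfolding T_def e_def
    by (subst higher_deriv_mult[where S=UNIV]) (auto intro!: holomorphic_intros simp: exp_lin_hderiv)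
  also have "\<dots> = T 0 + (\<Sum>i=1..p. T i)"
    by (simp add: sum.atLeast_Suc_atMost)
  finally have eq: "(deriv ^^ p) (Gf k s) (of_real u) = T 0 + (\<Sum>i=1..p. T i)" .
  have ne: "norm e = 1" by (simp add: e_def c_def norm_exp_eq_Re)
  have nc: "norm c = k * \<bar>s\<bar>" using k by (simp add: c_def norm_mult)
  have T0: "norm (T 0) = exp (- k * u^2 / 2) * (k * \<bar>s\<bar>)^p"
    by (simp add: T_def norm_mult norm_power ne nc norm_Gf_real)
  have Ti: "norm (T i) \<le> real (p choose i) * (fact i * exp 2 * exp (- k * u^2 / 2) * (k * (1 + \<bar>u\<bar>))^i) * (k * \<bar>s\<bar>)^(p-i)" for i
  proof -
    have "norm (T i) = real (p choose i) * norm ((deriv ^^ i) (Gf k 0) (of_real u)) * (k * \<bar>s\<bar>)^(p-i)"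
      by (simp add: T_def norm_mult norm_power ne nc)
    also have "\<dots> \<le> real (p choose i) * (fact i * exp 2 * exp (- k * u^2 / 2) * (k * (1 + \<bar>u\<bar>))^i) * (k * \<bar>s\<bar>)^(p-i)"
      using Gf_deriv_upper[OF k, of i 0 u] k
      by (intro mult_right_mono mult_left_mono) auto
    finally show ?thesis .
  qed
  have "norm (\<Sum>i=1..p. T i) \<le> (\<Sum>i=1..p. real (p choose i) * (fact i * exp 2 * exp (- k * u^2 / 2) * (k * (1 + \<bar>u\<bar>))^i) * (k * \<bar>s\<bar>)^(p-i))"
    by (rule order_trans[OF norm_sum sum_mono[OF Ti]])
  moreover have "norm (T 0 + (\<Sum>i=1..p. T i)) \<ge> norm (T 0) - norm (\<Sum>i=1..p. T i)"
    by (rule norm_diff_ineq)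
  ultimately show ?thesis unfolding eq T0[symmetric] by linarith
qed

lemma Gf_deriv_lower:
  fixes k s u :: real
  assumes k: "k \<ge> 1" and u: "\<bar>u\<bar> \<le> 1" and s: "\<bar>s\<bar> \<ge> 2 * Kc p + 1" and p: "p \<ge> 1"
  shows "norm ((deriv ^^ p) (Gf k s) (of_real u)) \<ge> exp (- k * u^2 / 2) * k^p * \<bar>s\<bar>^p / 2"
proof -
  define E where "E = exp (- k * u^2 / 2)"
  have E0: "E > 0" by (simp add: E_def)
  have s1: "\<bar>s\<bar> \<ge> 1" using s Kc_nonneg[of p] by linarith
  have "(\<Sum>i=1..p. real (p choose i) * (fact i * exp 2 * E * (k * (1 + \<bar>u\<bar>))^i) * (k * \<bar>s\<bar>)^(p-i))
      \<le> (\<Sum>i=1..p. E * k^p * (real (p choose i) * fact i * exp 2 * 2^i) * \<bar>s\<bar>^(p-1))"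
  proof (rule sum_mono)
    fix i assume i: "i \<in> {1..p}"
    have kp: "k^i * k^(p-i) = k^p" using i by (simp add: power_add[symmetric])
    have "(k * (1 + \<bar>u\<bar>))^i * (k * \<bar>s\<bar>)^(p-i) = k^p * ((1 + \<bar>u\<bar>)^i * \<bar>s\<bar>^(p-i))"
      by (simp add: power_mult_distrib kp[symmetric] mult_ac)
    also have "\<dots> \<le> k^p * (2^i * \<bar>s\<bar>^(p-1))"
    proof (intro mult_left_mono mult_mono)
      show "(1 + \<bar>u\<bar>)^i \<le> 2^i" using u by (intro power_mono) auto
      show "\<bar>s\<bar>^(p-i) \<le> \<bar>s\<bar>^(p-1)" using i s1 by (intro power_increasing) auto
    qed (use k in auto)
    finally have *: "(k * (1 + \<bar>u\<bar>))^i * (k * \<bar>s\<bar>)^(p-i) \<le> k^p * (2^i * \<bar>s\<bar>^(p-1))" .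
    have "real (p choose i) * (fact i * exp 2 * E * (k * (1 + \<bar>u\<bar>))^i) * (k * \<bar>s\<bar>)^(p-i)
        = (real (p choose i) * fact i * exp 2 * E) * ((k * (1 + \<bar>u\<bar>))^i * (k * \<bar>s\<bar>)^(p-i))"
      by (simp add: mult_ac)
    also have "\<dots> \<le> (real (p choose i) * fact i * exp 2 * E) * (k^p * (2^i * \<bar>s\<bar>^(p-1)))"
      by (rule mult_left_mono[OF *]) (use E0 in auto)
    also have "\<dots> = E * k^p * (real (p choose i) * fact i * exp 2 * 2^i) * \<bar>s\<bar>^(p-1)"
      by (simp add: mult_ac)
    finally show "real (p choose i) * (fact i * exp 2 * E * (k * (1 + \<bar>u\<bar>))^i) * (k * \<bar>s\<bar>)^(p-i)
      \<le> E * k^p * (real (p choose i) * fact i * exp 2 * 2^i) * \<bar>s\<bar>^(p-1)" .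
  qed
  also have "\<dots> = E * k^p * Kc p * \<bar>s\<bar>^(p-1)"
    by (simp add: Kc_def sum_distrib_left sum_distrib_right mult_ac)
  also have "\<dots> \<le> E * k^p * (\<bar>s\<bar>^p / 2)"
  proof -
    have "Kc p * \<bar>s\<bar>^(p-1) \<le> (\<bar>s\<bar> / 2) * \<bar>s\<bar>^(p-1)"
      using s by (intro mult_right_mono) auto
    also have "\<dots> = \<bar>s\<bar>^p / 2" using p by (cases p) auto
    finally show ?thesis using E0 k by (simp add: mult.assoc)
  qed
  finally have sum_le: "(\<Sum>i=1..p. real (p choose i) * (fact i * exp 2 * E * (k * (1 + \<bar>u\<bar>))^i) * (k * \<bar>s\<bar>)^(p-i))
      \<le> E * k^p * (\<bar>s\<bar>^p / 2)" .
  have "E * (k * \<bar>s\<bar>)^p = E * k^p * \<bar>s\<bar>^p" by (simp add: power_mult_distrib)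
  then show ?thesis using Gf_deriv_lower_aux[OF k, where p=p and s=s and u=u] sum_le unfolding E_def by simp
qed



definition Fb :: "real \<Rightarrow> real^'n \<Rightarrow> real^'n \<Rightarrow> ('n::finite \<Rightarrow> nat) \<Rightarrow> real^'n \<Rightarrow> complex" where
  "Fb k c xi b x = of_real ((k / pi) powr (real CARD('n) / 4)) *
     (\<Prod>i\<in>UNIV. (deriv ^^ b i) (Gf k (xi $ i)) (of_real (x $ i - c $ i)))"

lemma Fb_split:
  fixes b :: "'n::finite \<Rightarrow> nat"
  shows "Fb k c xi b x = of_real ((k / pi) powr (real CARD('n) / 4)) *
     ((deriv ^^ b j) (Gf k (xi $ j)) (of_real (x $ j - c $ j)) *
      (\<Prod>i\<in>UNIV-{j}. (deriv ^^ b i) (Gf k (xi $ i)) (of_real (x $ i - c $ i))))"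
  unfolding Fb_def by (subst prod.remove[of UNIV j]) auto

lemma pderiv_Fb:
  fixes b :: "'n::finite \<Rightarrow> nat"
  shows "pderiv_dir j (Fb k c xi b) = Fb k c xi (b(j := Suc (b j)))"
proof
  fix x :: "real^'n"
  define A where "A = complex_of_real ((k / pi) powr (real CARD('n) / 4))"
  define H where "H i = (deriv ^^ b i) (Gf k (xi $ i))" for i
  define P where "P = (\<Prod>i\<in>UNIV-{j}. H i (of_real (x $ i - c $ i)))"
  define a where "a = x $ j - c $ j"
  have ax: "(x + t *\<^sub>R axis j 1) $ i = (if i = j then x $ i + t else x $ i)" for t i
    by (simp add: axis_def)
  have eq1: "Fb k c xi b (x + t *\<^sub>R axis j 1) = A * (H j (of_real (a + t)) * P)" for t
  proof -
    have "(\<Prod>i\<in>UNIV-{j}. (deriv ^^ b i) (Gf k (xi $ i)) (of_real ((x + t *\<^sub>R axis j 1) $ i - c $ i))) = P"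
      unfolding P_def H_def by (intro prod.cong) (auto simp: axis_def)
    then show ?thesis
      by (subst Fb_split[of _ _ _ _ _ j]) (simp add: A_def H_def a_def ax algebra_simps)
  qed
  have eq2: "Fb k c xi (b(j := Suc (b j))) x = A * ((deriv ^^ Suc (b j)) (Gf k (xi $ j)) (of_real a) * P)"
  proof -
    have "(\<Prod>i\<in>UNIV-{j}. (deriv ^^ (b(j := Suc (b j))) i) (Gf k (xi $ i)) (of_real (x $ i - c $ i))) = P"
      unfolding P_def H_def by (intro prod.cong) auto
    then show ?thesis
      by (subst Fb_split[of _ _ _ _ _ j]) (simp add: A_def a_def)
  qed
  have d1: "((\<lambda>y. H j (of_real y)) has_vector_derivative (deriv ^^ Suc (b j)) (Gf k (xi $ j)) (of_real a)) (at a)"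
    unfolding H_def
    by (rule has_vector_derivative_real_field[OF has_field_derivative_higher_deriv[OF Gf_hol open_UNIV UNIV_I]])
  then have d1: "((\<lambda>y. H j (of_real y)) has_vector_derivative (deriv ^^ Suc (b j)) (Gf k (xi $ j)) (of_real a)) (at ((\<lambda>t. a + t) 0))"
    by simp
  have d0: "((\<lambda>t. a + t) has_vector_derivative 1) (at (0::real))"
    by (auto intro!: derivative_eq_intros)
  have "(((\<lambda>y. H j (of_real y)) \<circ> (\<lambda>t. a + t)) has_vector_derivative 1 *\<^sub>R (deriv ^^ Suc (b j)) (Gf k (xi $ j)) (of_real a)) (at 0)"
    by (rule vector_diff_chain_at[OF d0 d1])
  then have "((\<lambda>t. H j (of_real (a + t))) has_vector_derivative (deriv ^^ Suc (b j)) (Gf k (xi $ j)) (of_real a)) (at 0)"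
    by (simp add: o_def)
  then have "((\<lambda>t. A * (H j (of_real (a + t)) * P)) has_vector_derivative A * ((deriv ^^ Suc (b j)) (Gf k (xi $ j)) (of_real a) * P)) (at 0)"
    by (intro has_vector_derivative_mult_right has_vector_derivative_mult_left)
  then have "((\<lambda>t. Fb k c xi b (x + t *\<^sub>R axis j 1)) has_vector_derivative Fb k c xi (b(j := Suc (b j))) x) (at 0)"
    unfolding eq1 eq2 .
  then show "pderiv_dir j (Fb k c xi b) x = Fb k c xi (b(j := Suc (b j))) x"
    unfolding pderiv_dir_def by (rule vector_derivative_at)
qed

lemma fold_pderiv_Fb:
  fixes b :: "'n::finite \<Rightarrow> nat"
  shows "fold pderiv_dir L (Fb k c xi b) = Fb k c xi (\<lambda>i. b i + count (mset L) i)"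
proof (induction L arbitrary: b)
  case Nil then show ?case by simp
next
  case (Cons j L)
  have "fold pderiv_dir (j # L) (Fb k c xi b) = fold pderiv_dir L (Fb k c xi (b(j := Suc (b j))))"
    by (simp add: pderiv_Fb)
  also have "\<dots> = Fb k c xi (\<lambda>i. (b(j := Suc (b j))) i + count (mset L) i)" by (rule Cons.IH)
  also have "(\<lambda>i. (b(j := Suc (b j))) i + count (mset L) i) = (\<lambda>i. b i + count (mset (j # L)) i)"
    by (auto simp: fun_eq_iff)
  finally show ?case .
qed

lemma mi_deriv_Fb:
  fixes a :: "'n::finite \<Rightarrow> nat"
  shows "mi_deriv a (Fb k c xi (\<lambda>_. 0)) = Fb k c xi a"
proof -
  define M where "M = (\<Sum>i\<in>UNIV. replicate_mset (a i) i)"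
  define L where "L = (SOME L. mset L = M)"
  have L: "mset L = M" unfolding L_def by (rule someI_ex) (rule ex_mset)
  have cnt: "count M i = a i" for i
    unfolding M_def count_sum by (simp add: sum.delta)
  have "mi_deriv a (Fb k c xi (\<lambda>_. 0)) = fold pderiv_dir L (Fb k c xi (\<lambda>_. 0))"
    unfolding mi_deriv_def L_def M_def ..
  also have "\<dots> = Fb k c xi a" by (simp add: fold_pderiv_Fb L cnt)
  finally show ?thesis .
qed

lemma Psi_Fb:
  fixes m n :: "int^'n::finite"
  assumes k: "k > 0"
  shows "Psi k m n = Fb k (lattice_pt k m) (lattice_pt k n) (\<lambda>_. 0)"
proof
  fix x :: "real^'n"
  define u where "u = x - lattice_pt k m"
  define xi where "xi = lattice_pt k n"
  have "(\<Prod>i\<in>UNIV. Gf k (xi $ i) (of_real (u $ i)))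
      = exp (\<Sum>i\<in>UNIV. (- (of_real k / 2) * (of_real (u $ i))^2 + \<i> * of_real (k * xi $ i) * of_real (u $ i)))"
    by (simp add: Gf_def exp_sum)
  also have "(\<Sum>i\<in>UNIV. (- (of_real k / 2) * (of_real (u $ i))^2 + \<i> * of_real (k * xi $ i) * of_real (u $ i)))
      = (\<Sum>i\<in>UNIV. of_real (- (k / 2) * (u $ i * u $ i)) + \<i> * of_real (k * (u $ i * xi $ i)))"
    by (intro sum.cong) (simp_all add: power2_eq_square algebra_simps)
  also have "\<dots> = of_real (- (k / 2) * (\<Sum>i\<in>UNIV. u $ i * u $ i)) + \<i> * of_real (k * (\<Sum>i\<in>UNIV. u $ i * xi $ i))"
    by (simp add: sum.distrib sum_distrib_left sum_subtractf sum_negf sum_divide_distrib)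
  also have "\<dots> = of_real (- (k / 2) * (norm u)\<^sup>2) + \<i> * of_real (k * (u \<bullet> xi))"
  proof -
    have "(norm u)\<^sup>2 = u \<bullet> u" by (rule power2_norm_eq_inner)
    then show ?thesis by (simp add: inner_vec_def)
  qed
  also have "exp (of_real (- (k / 2) * (norm u)\<^sup>2) + \<i> * of_real (k * (u \<bullet> xi)))
      = of_real (exp (- (k / 2) * (norm u)\<^sup>2)) * cis (k * (u \<bullet> xi))"
    by (simp only: exp_add cis_conv_exp exp_of_real)
  finally have "(\<Prod>i\<in>UNIV. Gf k (xi $ i) (of_real (u $ i))) = of_real (exp (- (k / 2) * (norm u)\<^sup>2)) * cis (k * (u \<bullet> xi))" .
  then show "Psi k m n x = Fb k (lattice_pt k m) (lattice_pt k n) (\<lambda>_. 0) x"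
    unfolding Psi_def Fb_def by (simp add: u_def xi_def mult.assoc)
qed



lemma nn_integral_affine_eu:
  fixes c :: "'a::euclidean_space" and s :: real and f :: "'a \<Rightarrow> ennreal"
  assumes f[measurable]: "f \<in> borel_measurable borel" and s: "s \<noteq> 0"
  shows "(\<integral>\<^sup>+x. f x \<partial>lborel) = ennreal (\<bar>s\<bar>^DIM('a)) * (\<integral>\<^sup>+x. f (c + s *\<^sub>R x) \<partial>lborel)"
  by (subst lborel_affine[OF s, of c]) (simp add: nn_integral_density nn_integral_distr nn_integral_cmult)

lemma gauss_scaled:
  fixes c :: "'a::euclidean_space" and k :: real
  assumes k: "k > 0"
  shows "(\<integral>\<^sup>+x. ennreal (k powr (real DIM('a) / 2) * exp (- (k * norm (x - c) ^ 2) / 2)) \<partial>lborel)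
       = (\<integral>\<^sup>+x. ennreal (exp (- (norm (x::'a) ^ 2) / 2)) \<partial>lborel)"
proof -
  define s where "s = 1 / sqrt k"
  have s0: "s \<noteq> 0" "s > 0" using k by (auto simp: s_def)
  have sk: "k * s^2 = 1" using k by (simp add: s_def power_divide)
  have "sqrt k ^ DIM('a) = k powr (real DIM('a) / 2)"
    using powr_power[of k "1/2" "DIM('a)"] k by (simp add: powr_half_sqrt)
  then have sd: "\<bar>s\<bar>^DIM('a) * k powr (real DIM('a) / 2) = 1"
    using k s0 by (simp add: s_def power_one_over)
  have "(\<integral>\<^sup>+x. ennreal (k powr (real DIM('a) / 2) * exp (- (k * norm (x - c) ^ 2) / 2)) \<partial>lborel)
     = ennreal (\<bar>s\<bar>^DIM('a)) * (\<integral>\<^sup>+x. ennreal (k powr (real DIM('a) / 2) * exp (- (k * norm ((c + s *\<^sub>R x) - c) ^ 2) / 2)) \<partial>lborel)"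
    by (rule nn_integral_affine_eu[OF _ s0(1)]) measurable
  also have "\<dots> = (\<integral>\<^sup>+x. ennreal (\<bar>s\<bar>^DIM('a)) * ennreal (k powr (real DIM('a) / 2) * exp (- (k * norm ((c + s *\<^sub>R x) - c) ^ 2) / 2)) \<partial>lborel)"
    by (rule nn_integral_cmult[symmetric]) measurable
  also have "\<dots> = (\<integral>\<^sup>+x. ennreal (exp (- (norm (x::'a) ^ 2) / 2)) \<partial>lborel)"
  proof (rule nn_integral_cong)
    fix x :: 'a
    assume "x \<in> space lborel"
    have "k * norm ((c + s *\<^sub>R x) - c) ^ 2 = norm x ^ 2"
      using s0 sk by (simp add: power_mult_distrib mult.assoc[symmetric])
    then have "ennreal (\<bar>s\<bar>^DIM('a)) * ennreal (k powr (real DIM('a) / 2) * exp (- (k * norm ((c + s *\<^sub>R x) - c) ^ 2) / 2))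
        = ennreal ((\<bar>s\<bar>^DIM('a) * k powr (real DIM('a) / 2)) * exp (- (norm x ^ 2) / 2))"
      by (simp add: ennreal_mult[symmetric] mult.assoc)
    then show "ennreal (\<bar>s\<bar>^DIM('a)) * ennreal (k powr (real DIM('a) / 2) * exp (- (k * norm ((c + s *\<^sub>R x) - c) ^ 2) / 2))
        = ennreal (exp (- (norm x ^ 2) / 2))" by (simp add: sd)
  qed
  finally show ?thesis .
qed

lemma nn_integral_ball_lower:
  fixes f :: "'a::euclidean_space \<Rightarrow> real"
  assumes f[measurable]: "f \<in> borel_measurable borel" and r: "r \<ge> 0" and g: "\<gamma> \<ge> 0"
    and fb: "\<And>x. x \<in> ball c r \<Longrightarrow> f x \<ge> \<gamma>"
  shows "(\<integral>\<^sup>+x. ennreal (f x) \<partial>lborel) \<ge> ennreal (\<gamma> * (r^DIM('a) * measure lborel (ball (0::'a) 1)))"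
proof -
  have "(\<integral>\<^sup>+x. ennreal \<gamma> * indicator (ball c r) x \<partial>lborel) \<le> (\<integral>\<^sup>+x. ennreal (f x) \<partial>lborel)"
    by (intro nn_integral_mono) (auto simp: indicator_def intro!: ennreal_leI fb)
  moreover have "(\<integral>\<^sup>+x. ennreal \<gamma> * indicator (ball c r) x \<partial>lborel) = ennreal \<gamma> * emeasure lborel (ball c r)"
    by (rule nn_integral_cmult_indicator) simp
  moreover have "emeasure lborel (ball c r) = ennreal (measure lborel (ball c r))"
    using emeasure_lborel_ball_finite[of c r] by (intro emeasure_eq_ennreal_measure) simp
  moreover have "measure lborel (ball c r) = r^DIM('a) * measure lborel (ball (0::'a) 1)"
    by (rule content_ball_conv_unit_ball[OF r])
  moreover have "ennreal (\<gamma> * (r^DIM('a) * measure lborel (ball (0::'a) 1))) = ennreal \<gamma> * ennreal (r^DIM('a) * measure lborel (ball (0::'a) 1))"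
    by (rule ennreal_mult) (auto simp: r g measure_nonneg)
  ultimately show ?thesis by simp
qed

lemma L2_upper:
  fixes g :: "real^'n::finite \<Rightarrow> complex"
  assumes g[measurable]: "g \<in> borel_measurable lborel"
    and le: "(\<integral>\<^sup>+x. ennreal ((cmod (g x))^2) \<partial>lborel) \<le> ennreal B" and B: "B \<ge> 0"
  shows "L2_norm_sq g \<le> B"
proof -
  have "L2_norm_sq g = enn2real (\<integral>\<^sup>+x. ennreal ((cmod (g x))^2) \<partial>lborel)"
    unfolding L2_norm_sq_def by (rule integral_eq_nn_integral) auto
  also have "\<dots> \<le> enn2real (ennreal B)" by (rule enn2real_mono[OF le]) simp
  finally show ?thesis using B by simp
qed

lemma L2_lower:
  fixes g :: "real^'n::finite \<Rightarrow> complex"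
  assumes g[measurable]: "g \<in> borel_measurable lborel"
    and le: "(\<integral>\<^sup>+x. ennreal ((cmod (g x))^2) \<partial>lborel) \<le> ennreal B"
    and ge: "ennreal \<gamma> \<le> (\<integral>\<^sup>+x. ennreal ((cmod (g x))^2) \<partial>lborel)" and gam: "\<gamma> \<ge> 0"
  shows "\<gamma> \<le> L2_norm_sq g"
proof -
  have fin: "(\<integral>\<^sup>+x. ennreal ((cmod (g x))^2) \<partial>lborel) < top"
    using le by (rule order.strict_trans1) simp
  have "\<gamma> = enn2real (ennreal \<gamma>)" using gam by simp
  also have "\<dots> \<le> enn2real (\<integral>\<^sup>+x. ennreal ((cmod (g x))^2) \<partial>lborel)"
    by (rule enn2real_mono[OF ge fin])
  also have "\<dots> = L2_norm_sq g"
    unfolding L2_norm_sq_def by (rule integral_eq_nn_integral[symmetric]) auto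
  finally show ?thesis .
qed



abbreviation Acoef :: "real \<Rightarrow> 'n::finite itself \<Rightarrow> real" where
  "Acoef k _ \<equiv> (k / pi) powr (real CARD('n) / 4)"

lemma norm_sq_vec: "(norm (u::real^'n::finite))^2 = (\<Sum>i\<in>UNIV. (u $ i)^2)"
proof -
  have "(norm u)^2 = u \<bullet> u" by (rule power2_norm_eq_inner)
  then show ?thesis by (simp add: inner_vec_def power2_eq_square)
qed

lemma Fb_norm:
  fixes c xi :: "real^'n::finite"
  shows "cmod (Fb k c xi b x) = (k / pi) powr (real CARD('n) / 4) *
     (\<Prod>i\<in>UNIV. cmod ((deriv ^^ b i) (Gf k (xi $ i)) (of_real (x $ i - c $ i))))"
  unfolding Fb_def by (simp add: norm_mult prod_norm)

lemma prod_exp_sq: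
  fixes u :: "real^'n::finite"
  shows "(\<Prod>i\<in>UNIV. exp (- k * (u $ i)^2 / 2)) = exp (- k * (norm u)^2 / 2)"
  by (simp add: exp_sum[symmetric] norm_sq_vec sum_distrib_left sum_divide_distrib)

lemma Fb_cont:
  fixes c xi :: "real^'n::finite"
  shows "continuous_on UNIV (Fb k c xi b)"
proof -
  have "continuous_on UNIV (\<lambda>x::real^'n. (deriv ^^ b i) (Gf k (xi $ i)) (of_real (x $ i - c $ i)))" for i
  proof (rule continuous_on_compose2[of UNIV "(deriv ^^ b i) (Gf k (xi $ i))"])
    show "continuous_on UNIV ((deriv ^^ b i) (Gf k (xi $ i)))"
      by (intro holomorphic_on_imp_continuous_on holomorphic_higher_deriv Gf_hol) simp
    show "continuous_on UNIV (\<lambda>x::real^'n. complex_of_real (x $ i - c $ i))"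
      by (intro continuous_intros)
  qed auto
  then show ?thesis unfolding Fb_def by (intro continuous_intros) auto
qed

lemma Fb_meas:
  fixes c xi :: "real^'n::finite"
  shows "(\<lambda>x. complex_of_real (norm x ^ q) * Fb k c xi b x) \<in> borel_measurable lborel"
proof -
  have "continuous_on UNIV (\<lambda>x. complex_of_real (norm x ^ q) * Fb k c xi b x)"
    by (intro continuous_intros Fb_cont)
  then show ?thesis by (simp add: borel_measurable_continuous_onI)
qed

lemma Fb_upper_pt:
  fixes c xi x :: "real^'n::finite" and a :: "'n \<Rightarrow> nat"
  assumes k: "k \<ge> 1"
  shows "cmod (Fb k c xi a x) \<le> (k / pi) powr (real CARD('n) / 4) * (\<Prod>i\<in>UNIV. fact (a i) * exp 2)
      * (k * (1 + norm (x - c) + norm xi)) ^ mi_order a * exp (- k * (norm (x - c))^2 / 2)"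
proof -
  define u where "u = x - c"
  define X where "X = k * (1 + norm u + norm xi)"
  have "(\<Prod>i\<in>UNIV. cmod ((deriv ^^ a i) (Gf k (xi $ i)) (of_real (x $ i - c $ i))))
      \<le> (\<Prod>i\<in>UNIV. (fact (a i) * exp 2) * exp (- k * (u $ i)^2 / 2) * X ^ a i)"
  proof (rule prod_mono, safe)
    fix i
    show "0 \<le> cmod ((deriv ^^ a i) (Gf k (xi $ i)) (of_real (x $ i - c $ i)))" by simp
    have "cmod ((deriv ^^ a i) (Gf k (xi $ i)) (of_real (u $ i)))
        \<le> fact (a i) * exp 2 * exp (- k * (u $ i)^2 / 2) * (k * (1 + \<bar>u $ i\<bar> + \<bar>xi $ i\<bar>)) ^ a i"
      by (rule Gf_deriv_upper[OF k])
    also have "\<dots> \<le> fact (a i) * exp 2 * exp (- k * (u $ i)^2 / 2) * X ^ a i"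
      unfolding X_def using k component_le_norm_cart[of u i] component_le_norm_cart[of xi i]
      by (intro mult_left_mono power_mono) auto
    finally show "cmod ((deriv ^^ a i) (Gf k (xi $ i)) (of_real (x $ i - c $ i)))
        \<le> (fact (a i) * exp 2) * exp (- k * (u $ i)^2 / 2) * X ^ a i" by (simp add: u_def)
  qed
  also have "\<dots> = (\<Prod>i\<in>UNIV. fact (a i) * exp 2) * (\<Prod>i\<in>UNIV. exp (- k * (u $ i)^2 / 2)) * (\<Prod>i\<in>UNIV. X ^ a i)"
    by (simp add: prod.distrib)
  also have "\<dots> = (\<Prod>i\<in>UNIV. fact (a i) * exp 2) * exp (- k * (norm u)^2 / 2) * X ^ mi_order a"
    unfolding prod_exp_sq by (simp add: mi_order_def power_sum)
  finally have *: "(\<Prod>i\<in>UNIV. cmod ((deriv ^^ a i) (Gf k (xi $ i)) (of_real (x $ i - c $ i))))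
      \<le> (\<Prod>i\<in>UNIV. fact (a i) * exp 2) * exp (- k * (norm u)^2 / 2) * X ^ mi_order a" .
  show ?thesis
    unfolding Fb_norm using mult_left_mono[OF *, of "(k / pi) powr (real CARD('n) / 4)"]
    by (simp add: X_def u_def mult_ac)
qed



lemma poly_exp_bound:
  fixes y :: real assumes y: "y \<ge> 0"
  shows "(1 + y)^(2*p) \<le> exp (2 * real p ^ 2) * exp (y^2 / 2)"
proof -
  have "(1 + y)^(2*p) \<le> (exp y)^(2*p)"
    using y by (intro power_mono) (auto simp: add.commute exp_ge_add_one_self)
  also have "\<dots> = exp (real (2*p) * y)" by (rule exp_of_nat_mult[symmetric])
  also have "\<dots> \<le> exp (2 * real p ^ 2 + y^2 / 2)"
  proof -
    have "0 \<le> (y - 2 * real p)^2 / 2" by simp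
    then have "real (2*p) * y \<le> 2 * real p ^ 2 + y^2 / 2"
      by (simp add: power2_eq_square algebra_simps)
    then show ?thesis by simp
  qed
  also have "\<dots> = exp (2 * real p ^ 2) * exp (y^2 / 2)" by (rule exp_add)
  finally show ?thesis .
qed

lemma pt_bound:
  fixes k nx nu nc nxi F A M Mp :: real
  assumes k: "k \<ge> 1" and nx: "nx \<le> nc + nu" "nx \<ge> 0" and nu: "nu \<ge> 0" and nc: "nc \<ge> 0" and nxi: "nxi \<ge> 0"
    and qj: "q + j \<le> p" and F0: "F \<ge> 0" and A: "A \<ge> 0" and M: "0 \<le> M" "M \<le> Mp"
    and F: "F \<le> A * M * (k * (1 + nu + nxi))^j * exp (- k * nu^2 / 2)"
  shows "(nx^q * F)^2 \<le> k^(2*j) * Mp^2 * (1 + nc + nxi)^(2*p) * exp (2 * real p ^ 2) * (A^2 * exp (- (k * nu^2) / 2))"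
proof -
  define W where "W = 1 + nc + nxi"
  have W1: "W \<ge> 1" using nc nxi by (simp add: W_def)
  have h1: "nx \<le> W * (1 + nu)" using nx nu nc nxi W1
    by (simp add: W_def algebra_simps) (smt (verit) mult_nonneg_nonneg)
  have h2: "1 + nu + nxi \<le> W * (1 + nu)" using nx nu nc nxi W1
    by (simp add: W_def algebra_simps)
  have B1: "W * (1 + nu) \<ge> 1" using W1 nu by (smt (verit) mult_le_cancel_left1)
  have "nx^q * (1 + nu + nxi)^j \<le> (W * (1 + nu))^q * (W * (1 + nu))^j"
    using h1 h2 nx nu nxi by (intro mult_mono power_mono) auto
  also have "\<dots> = (W * (1 + nu))^(q + j)" by (simp add: power_add)
  also have "\<dots> \<le> (W * (1 + nu))^p" using B1 qj by (intro power_increasing) auto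
  finally have h3: "nx^q * (1 + nu + nxi)^j \<le> (W * (1 + nu))^p" .
  have "nx^q * F \<le> nx^q * (A * M * (k * (1 + nu + nxi))^j * exp (- k * nu^2 / 2))"
    using F nx by (intro mult_left_mono) auto
  also have "\<dots> = (A * M * k^j * exp (- k * nu^2 / 2)) * (nx^q * (1 + nu + nxi)^j)"
    by (simp add: power_mult_distrib mult_ac)
  also have "\<dots> \<le> (A * Mp * k^j * exp (- k * nu^2 / 2)) * ((W * (1 + nu))^p)"
    using A M k h3 nx nu nxi by (intro mult_mono) (auto intro!: mult_nonneg_nonneg)
  finally have h4: "nx^q * F \<le> A * Mp * k^j * exp (- k * nu^2 / 2) * (W * (1 + nu))^p" .
  have "(nx^q * F)^2 \<le> (A * Mp * k^j * exp (- k * nu^2 / 2) * (W * (1 + nu))^p)^2"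
    using h4 F0 nx by (intro power_mono) auto
  also have "\<dots> = k^(2*j) * Mp^2 * W^(2*p) * (A^2 * (exp (- k * nu^2 / 2))^2 * (1 + nu)^(2*p))"
    by (simp add: power_mult_distrib power_mult[symmetric] mult_ac)
  also have "(exp (- k * nu^2 / 2))^2 = exp (- (k * nu^2) / 2) * exp (- (k * nu^2) / 2)"
    by (simp add: power2_eq_square)
  also have "k^(2*j) * Mp^2 * W^(2*p) * (A^2 * (exp (- (k * nu^2) / 2) * exp (- (k * nu^2) / 2)) * (1 + nu)^(2*p))
      \<le> k^(2*j) * Mp^2 * W^(2*p) * (A^2 * (exp (- (k * nu^2) / 2) * exp (- (k * nu^2) / 2)) * (exp (2 * real p ^ 2) * exp ((sqrt k * nu)^2 / 2)))"
  proof -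
    have "(1 + nu)^(2*p) \<le> (1 + sqrt k * nu)^(2*p)"
    proof (intro power_mono)
      have "1 * nu \<le> sqrt k * nu" using k nu by (intro mult_right_mono) auto
      then show "1 + nu \<le> 1 + sqrt k * nu" by simp
    qed (use nu in auto)
    also have "\<dots> \<le> exp (2 * real p ^ 2) * exp ((sqrt k * nu)^2 / 2)"
      by (rule poly_exp_bound) (use k nu in auto)
    finally show ?thesis by (intro mult_left_mono) auto
  qed
  also have "exp (- (k * nu^2) / 2) * exp ((sqrt k * nu)^2 / 2) = 1"
    using k by (simp add: power_mult_distrib exp_minus[symmetric] flip: exp_add)
  then have "k^(2*j) * Mp^2 * W^(2*p) * (A^2 * (exp (- (k * nu^2) / 2) * exp (- (k * nu^2) / 2)) * (exp (2 * real p ^ 2) * exp ((sqrt k * nu)^2 / 2)))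
      = k^(2*j) * Mp^2 * W^(2*p) * exp (2 * real p ^ 2) * (A^2 * exp (- (k * nu^2) / 2))"
    by (simp add: mult_ac)
  finally show ?thesis by (simp add: W_def)
qed



definition Gr :: "'n::finite itself \<Rightarrow> real" where
  "Gr _ = enn2real (\<integral>\<^sup>+x. ennreal (exp (- (norm (x::real^'n) ^ 2) / 2)) \<partial>lborel)"

lemma Gr_eq: "(\<integral>\<^sup>+x. ennreal (exp (- (norm (x::real^'n::finite) ^ 2) / 2)) \<partial>lborel) = ennreal (Gr TYPE('n))"
  unfolding Gr_def by (rule ennreal_enn2real[symmetric]) (use gauss_nn_finite in \<open>simp add: infinity_ennreal_def\<close>)

lemma Gr_nonneg: "Gr TYPE('n::finite) \<ge> 0"
  unfolding Gr_def by simp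

lemma gauss_scaled_cart:
  fixes c :: "real^'n::finite"
  assumes k: "k > 0"
  shows "(\<integral>\<^sup>+x. ennreal (k powr (real CARD('n) / 2) * exp (- (k * norm (x - c) ^ 2) / 2)) \<partial>lborel)
       = ennreal (Gr TYPE('n))"
  unfolding Gr_eq[symmetric] using gauss_scaled[OF k, of c] by simp

lemma Acoef_sq:
  assumes k: "k > 0"
  shows "((k / pi) powr (real CARD('n::finite) / 4))^2 = k powr (real CARD('n) / 2) / pi powr (real CARD('n) / 2)"
proof -
  have "((k / pi) powr (real CARD('n) / 4))^2 = (k / pi) powr (of_nat 2 * (real CARD('n) / 4))"
    by (rule powr_power) (use k in simp)
  also have "\<dots> = (k / pi) powr (real CARD('n) / 2)" by simp
  also have "\<dots> = k powr (real CARD('n) / 2) / pi powr (real CARD('n) / 2)"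
    by (rule powr_divide)
  finally show ?thesis .
qed

definition Cup :: "'n::finite itself \<Rightarrow> nat \<Rightarrow> real" where
  "Cup _ p = ((fact p * exp 2)^CARD('n))^2 * exp (2 * real p ^ 2) * Gr TYPE('n) / pi powr (real CARD('n) / 2)"

lemma Cup_nonneg: "Cup TYPE('n::finite) p \<ge> 0"
  unfolding Cup_def using Gr_nonneg by (intro divide_nonneg_pos mult_nonneg_nonneg) auto

lemma term_upper:
  fixes c xi :: "real^'n::finite" and a :: "'n \<Rightarrow> nat"
  assumes k: "k \<ge> 1" and aq: "mi_order a + q \<le> p"
  shows "(\<integral>\<^sup>+x. ennreal ((cmod (complex_of_real (norm x ^ q) * Fb k c xi a x))^2) \<partial>lborel)
     \<le> ennreal (k^(2 * mi_order a) * (1 + norm c + norm xi)^(2*p) * Cup TYPE('n) p)"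
proof -
  define d where "d = CARD('n)"
  define A where "A = (k / pi) powr (real CARD('n) / 4)"
  define Mp where "Mp = (fact p * exp 2 :: real)^CARD('n)"
  define Kx where "Kx = k^(2 * mi_order a) * Mp^2 * (1 + norm c + norm xi)^(2*p) * exp (2 * real p ^ 2) / pi powr (real CARD('n) / 2)"
  have k0: "k > 0" using k by simp
  have pt: "(cmod (complex_of_real (norm x ^ q) * Fb k c xi a x))^2
      \<le> Kx * (k powr (real CARD('n) / 2) * exp (- (k * norm (x - c) ^ 2) / 2))" for x
  proof -
    have ai: "a i \<le> p" for i
    proof -
      have "a i \<le> mi_order a" unfolding mi_order_def by (rule member_le_sum) auto
      then show ?thesis using aq by simp
    qed
    have M: "(\<Prod>i\<in>UNIV. fact (a i) * exp 2) \<le> Mp"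
    proof -
      have "(\<Prod>i\<in>UNIV. fact (a i) * exp 2 :: real) \<le> (\<Prod>i\<in>(UNIV::'n set). fact p * exp 2)"
        using ai by (intro prod_mono) (auto intro: fact_mono)
      then show ?thesis by (simp add: Mp_def)
    qed
    have M0: "(\<Prod>i\<in>UNIV. fact (a i) * exp 2) \<ge> (0::real)" by (intro prod_nonneg) auto
    have nx: "norm x \<le> norm c + norm (x - c)"
      using norm_triangle_ineq[of c "x - c"] by simp
    have "(norm x ^ q * cmod (Fb k c xi a x))^2 \<le> k^(2 * mi_order a) * Mp^2 * (1 + norm c + norm xi)^(2*p) * exp (2 * real p ^ 2) * (A^2 * exp (- (k * norm (x - c)^2) / 2))"
      by (rule pt_bound[OF k nx norm_ge_zero norm_ge_zero norm_ge_zero norm_ge_zero aq[simplified add.commute] norm_ge_zero _ M0 M])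
         (use Fb_upper_pt[OF k, of c xi a x] in \<open>auto simp: A_def\<close>)
    also have "A^2 = k powr (real CARD('n) / 2) / pi powr (real CARD('n) / 2)"
      unfolding A_def by (rule Acoef_sq[OF k0])
    finally show ?thesis by (simp add: norm_mult norm_power Kx_def mult_ac)
  qed
  have "(\<integral>\<^sup>+x. ennreal ((cmod (complex_of_real (norm x ^ q) * Fb k c xi a x))^2) \<partial>lborel)
     \<le> (\<integral>\<^sup>+x. ennreal Kx * ennreal (k powr (real CARD('n) / 2) * exp (- (k * norm (x - c) ^ 2) / 2)) \<partial>lborel)"
  proof (rule nn_integral_mono)
    fix x
    have "Kx \<ge> 0" unfolding Kx_def using k by (intro divide_nonneg_pos mult_nonneg_nonneg) auto
    then show "ennreal ((cmod (complex_of_real (norm x ^ q) * Fb k c xi a x))^2)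
        \<le> ennreal Kx * ennreal (k powr (real CARD('n) / 2) * exp (- (k * norm (x - c) ^ 2) / 2))"
      using pt[of x] by (simp add: ennreal_mult[symmetric] ennreal_leI)
  qed
  also have "\<dots> = ennreal Kx * (\<integral>\<^sup>+x. ennreal (k powr (real CARD('n) / 2) * exp (- (k * norm (x - c) ^ 2) / 2)) \<partial>lborel)"
    by (rule nn_integral_cmult) measurable
  also have "\<dots> = ennreal Kx * ennreal (Gr TYPE('n))" using gauss_scaled_cart[OF k0, of c] by simp
  also have "\<dots> = ennreal (Kx * Gr TYPE('n))"
  proof (rule ennreal_mult[symmetric])
    show "0 \<le> Kx" unfolding Kx_def using k by (intro divide_nonneg_pos mult_nonneg_nonneg) auto
  qed (rule Gr_nonneg)
  also have "Kx * Gr TYPE('n) = k^(2 * mi_order a) * (1 + norm c + norm xi)^(2*p) * Cup TYPE('n) p"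
    by (simp add: Kx_def Cup_def Mp_def)
  finally show ?thesis .
qed



definition beta :: "'n::finite itself \<Rightarrow> real" where
  "beta _ = exp (-1) * measure lborel (ball (0::real^'n) 1) / pi powr (real CARD('n) / 2)"

lemma beta_pos: "beta TYPE('n::finite) > 0"
proof -
  have "measure lborel (ball (0::real^'n) 1) > 0"
    using content_ball_pos[of 1 "0::real^'n"] by simp
  then show ?thesis unfolding beta_def by simp
qed

lemma lower_gen:
  fixes c :: "real^'n::finite" and f :: "real^'n \<Rightarrow> real"
  assumes k: "k \<ge> 1" and g: "\<gamma> \<ge> 0" and f: "f \<in> borel_measurable borel"
    and fb: "\<And>x. norm (x - c) < 1 / sqrt k \<Longrightarrow> f x \<ge> \<gamma> * (((k / pi) powr (real CARD('n) / 4))^2 * exp (-1))"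
  shows "(\<integral>\<^sup>+x. ennreal (f x) \<partial>lborel) \<ge> ennreal (\<gamma> * beta TYPE('n))"
proof -
  have k0: "k > 0" using k by simp
  define r where "r = 1 / sqrt k"
  have r0: "r \<ge> 0" using k0 by (simp add: r_def)
  define g' where "g' = \<gamma> * (((k / pi) powr (real CARD('n) / 4))^2 * exp (-1))"
  have g'0: "g' \<ge> 0" using g k by (simp add: g'_def)
  have "(\<integral>\<^sup>+x. ennreal (f x) \<partial>lborel) \<ge> ennreal (g' * (r^DIM(real^'n) * measure lborel (ball (0::real^'n) 1)))"
    by (rule nn_integral_ball_lower[OF f r0 g'0]) (auto simp: g'_def r_def dist_norm norm_minus_commute intro!: fb)
  moreover have "g' * (r^DIM(real^'n) * measure lborel (ball (0::real^'n) 1)) = \<gamma> * beta TYPE('n)"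
  proof -
    have "sqrt k ^ CARD('n) = k powr (real CARD('n) / 2)"
      using powr_power[of k "1/2" "CARD('n)"] k by (simp add: powr_half_sqrt)
    then have sd: "r^CARD('n) * k powr (real CARD('n) / 2) = 1"
      using k by (simp add: r_def power_one_over)
    have "g' * (r^DIM(real^'n) * measure lborel (ball (0::real^'n) 1))
        = \<gamma> * ((r^CARD('n) * k powr (real CARD('n) / 2)) * exp (-1) * measure lborel (ball (0::real^'n) 1) / pi powr (real CARD('n) / 2))"
      by (simp add: g'_def Acoef_sq[OF k0] mult_ac)
    also have "\<dots> = \<gamma> * beta TYPE('n)" by (simp add: sd beta_def)
    finally show ?thesis .
  qed
  ultimately show ?thesis by simp
qed

lemma small_ball:
  fixes u :: "real^'n::finite"
  assumes k: "k \<ge> 1" and u: "norm u < 1 / sqrt k"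
  shows "k * (norm u)^2 \<le> 1" and "norm u \<le> 1" and "exp (- k * (norm u)^2 / 2) \<ge> exp (- 1 / 2)"
proof -
  have "(norm u)^2 \<le> (1 / sqrt k)^2" using u by (intro power_mono) auto
  then show k1: "k * (norm u)^2 \<le> 1" using k by (simp add: power_divide field_simps)
  have "1 / sqrt k \<le> 1" using k by (simp add: field_simps)
  then show "norm u \<le> 1" using u by simp
  show "exp (- k * (norm u)^2 / 2) \<ge> exp (- 1 / 2)" using k1 by simp
qed

lemma Fb0_norm:
  fixes c xi x :: "real^'n::finite"
  shows "cmod (Fb k c xi (\<lambda>_. 0) x) = (k / pi) powr (real CARD('n) / 4) * exp (- k * (norm (x - c))^2 / 2)"
proof -
  have "(\<Prod>i\<in>UNIV. cmod (Gf k (xi $ i) (of_real (x $ i - c $ i)))) = (\<Prod>i\<in>UNIV. exp (- k * ((x - c) $ i)^2 / 2))"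
    by (intro prod.cong refl) (simp add: norm_Gf_real del: of_real_diff)
  also have "\<dots> = exp (- k * (norm (x - c))^2 / 2)" by (rule prod_exp_sq)
  finally have *: "(\<Prod>i\<in>UNIV. cmod (Gf k (xi $ i) (of_real (x $ i - c $ i)))) = exp (- k * (norm (x - c))^2 / 2)" .
  show ?thesis unfolding Fb_norm using * by simp
qed

lemma sq_lower:
  fixes F A L E :: real
  assumes "F \<ge> A * L * E" "A \<ge> 0" "L \<ge> 0" "E \<ge> exp (- 1 / 2)"
  shows "F^2 \<ge> L^2 * (A^2 * exp (-1))"
proof -
  have "A * L * exp (- 1 / 2) \<le> A * L * E" using assms by (intro mult_left_mono) auto
  then have "(A * L * exp (- 1 / 2))^2 \<le> F^2" using assms by (intro power_mono) auto
  moreover have "(exp (- 1 / 2 :: real))^2 = exp (-1)"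
    by (simp add: power2_eq_square flip: exp_add)
  ultimately show ?thesis by (simp add: power_mult_distrib mult_ac)
qed

lemma lower0:
  fixes c xi :: "real^'n::finite"
  assumes k: "k \<ge> 1"
  shows "(\<integral>\<^sup>+x. ennreal ((cmod (complex_of_real (norm x ^ 0) * Fb k c xi (\<lambda>_. 0) x))^2) \<partial>lborel) \<ge> ennreal (1 * beta TYPE('n))"
proof (rule lower_gen[OF k])
  show "(\<lambda>x. (cmod (complex_of_real (norm x ^ 0) * Fb k c xi (\<lambda>_. 0) x))^2) \<in> borel_measurable borel"
    using Fb_meas[of 0 k c xi "\<lambda>_. 0"] by measurable
  fix x :: "real^'n" assume x: "norm (x - c) < 1 / sqrt k"
  have "cmod (Fb k c xi (\<lambda>_. 0) x) \<ge> (k / pi) powr (real CARD('n) / 4) * 1 * exp (- k * (norm (x - c))^2 / 2)"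
    by (simp add: Fb0_norm)
  from sq_lower[OF this _ _ small_ball(3)[OF k x]]
  show "1 * (((k / pi) powr (real CARD('n) / 4))^2 * exp (-1)) \<le> (cmod (complex_of_real (norm x ^ 0) * Fb k c xi (\<lambda>_. 0) x))^2"
    by simp
qed simp

lemma lowerx:
  fixes c xi :: "real^'n::finite"
  assumes k: "k \<ge> 1" and c: "norm c \<ge> 2"
  shows "(\<integral>\<^sup>+x. ennreal ((cmod (complex_of_real (norm x ^ p) * Fb k c xi (\<lambda>_. 0) x))^2) \<partial>lborel)
     \<ge> ennreal (((norm c / 2)^p)^2 * beta TYPE('n))"
proof (rule lower_gen[OF k])
  show "(\<lambda>x. (cmod (complex_of_real (norm x ^ p) * Fb k c xi (\<lambda>_. 0) x))^2) \<in> borel_measurable borel"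
    using Fb_meas[of p k c xi "\<lambda>_. 0"] by measurable
  fix x :: "real^'n" assume x: "norm (x - c) < 1 / sqrt k"
  have "norm c \<le> norm x + norm (x - c)" using norm_triangle_ineq[of x "c - x"] by (simp add: norm_minus_commute)
  then have nx: "norm x \<ge> norm c / 2" using small_ball(2)[OF k x] c by linarith
  have "cmod (complex_of_real (norm x ^ p) * Fb k c xi (\<lambda>_. 0) x)
      \<ge> (k / pi) powr (real CARD('n) / 4) * (norm c / 2)^p * exp (- k * (norm (x - c))^2 / 2)"
  proof -
    have "(norm c / 2)^p \<le> norm x ^ p" using nx c by (intro power_mono) auto
    then have "(norm c / 2)^p * cmod (Fb k c xi (\<lambda>_. 0) x) \<le> norm x ^ p * cmod (Fb k c xi (\<lambda>_. 0) x)"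
      by (intro mult_right_mono) auto
    then show ?thesis by (simp add: norm_mult norm_power Fb0_norm mult_ac)
  qed
  then show "((norm c / 2)^p)^2 * (((k / pi) powr (real CARD('n) / 4))^2 * exp (-1))
      \<le> (cmod (complex_of_real (norm x ^ p) * Fb k c xi (\<lambda>_. 0) x))^2"
    by (rule sq_lower) (use c small_ball(3)[OF k x] in auto)
qed (simp)

lemma loweri:
  fixes c xi :: "real^'n::finite"
  assumes k: "k \<ge> 1" and p: "p \<ge> 1" and s: "\<bar>xi $ i\<bar> \<ge> 2 * Kc p + 1"
  shows "(\<integral>\<^sup>+x. ennreal ((cmod (complex_of_real (norm x ^ 0) * Fb k c xi (\<lambda>j. if j = i then p else 0) x))^2) \<partial>lborel)
     \<ge> ennreal ((k^p * \<bar>xi $ i\<bar>^p / 2)^2 * beta TYPE('n))"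
proof (rule lower_gen[OF k])
  define a where "a = (\<lambda>j. if j = i then p else 0)"
  show "(\<lambda>x. (cmod (complex_of_real (norm x ^ 0) * Fb k c xi (\<lambda>j. if j = i then p else 0) x))^2) \<in> borel_measurable borel"
    using Fb_meas[of 0 k c xi "\<lambda>j. if j = i then p else 0"] by measurable
  fix x :: "real^'n" assume x: "norm (x - c) < 1 / sqrt k"
  define u where "u = x - c"
  define L where "L = k^p * \<bar>xi $ i\<bar>^p / 2"
  have L0: "L \<ge> 0" using k by (simp add: L_def)
  have ui: "\<bar>u $ i\<bar> \<le> 1" using component_le_norm_cart[of u i] small_ball(2)[OF k x] by (simp add: u_def)
  have "(\<Prod>j\<in>UNIV. cmod ((deriv ^^ a j) (Gf k (xi $ j)) (of_real (x $ j - c $ j))))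
      \<ge> (\<Prod>j\<in>UNIV. (if j = i then L else 1) * exp (- k * (u $ j)^2 / 2))"
  proof (rule prod_mono, safe)
    fix j
    show "0 \<le> (if j = i then L else 1) * exp (- k * (u $ j)^2 / 2)" using L0 by simp
    show "(if j = i then L else 1) * exp (- k * (u $ j)^2 / 2) \<le> cmod ((deriv ^^ a j) (Gf k (xi $ j)) (of_real (x $ j - c $ j)))"
    proof (cases "j = i")
      case True
      have "exp (- k * (u $ i)^2 / 2) * k^p * \<bar>xi $ i\<bar>^p / 2 \<le> cmod ((deriv ^^ p) (Gf k (xi $ i)) (of_real (u $ i)))"
        by (rule Gf_deriv_lower[OF k ui s p])
      then show ?thesis using True by (simp add: a_def L_def u_def mult_ac)
    next
      case False
      then show ?thesis by (simp add: a_def u_def norm_Gf_real del: of_real_diff)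
    qed
  qed
  also have "(\<Prod>j\<in>UNIV. (if j = i then L else 1) * exp (- k * (u $ j)^2 / 2)) = L * exp (- k * (norm u)^2 / 2)"
    unfolding prod.distrib prod_exp_sq by (simp add: prod.delta)
  finally have P: "L * exp (- k * (norm u)^2 / 2) \<le> (\<Prod>j\<in>UNIV. cmod ((deriv ^^ a j) (Gf k (xi $ j)) (of_real (x $ j - c $ j))))" .
  have "cmod (complex_of_real (norm x ^ 0) * Fb k c xi a x) \<ge> (k / pi) powr (real CARD('n) / 4) * L * exp (- k * (norm (x - c))^2 / 2)"
    using mult_left_mono[OF P, of "(k / pi) powr (real CARD('n) / 4)"] by (simp add: Fb_norm u_def mult_ac)
  from sq_lower[OF this _ L0 small_ball(3)[OF k x]]
  show "(k^p * \<bar>xi $ i\<bar>^p / 2)^2 * (((k / pi) powr (real CARD('n) / 4))^2 * exp (-1))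
      \<le> (cmod (complex_of_real (norm x ^ 0) * Fb k c xi (\<lambda>j. if j = i then p else 0) x))^2"
    by (simp add: L_def a_def)
qed (simp)



lemma pow3:
  fixes a b :: real assumes a: "a \<ge> 0" and b: "b \<ge> 0"
  shows "(1 + a + b)^p \<le> 3^p * (1 + a^p + b^p)"
proof -
  define m where "m = max 1 (max a b)"
  have "1 + a + b \<le> 3 * m" unfolding m_def by linarith
  then have "(1 + a + b)^p \<le> (3 * m)^p" using a b by (intro power_mono) auto
  also have "\<dots> = 3^p * m^p" by (simp add: power_mult_distrib)
  also have "m^p \<le> 1 + a^p + b^p"
  proof -
    have "m = 1 \<or> m = a \<or> m = b" unfolding m_def by linarith
    moreover have "a^p \<ge> 0" "b^p \<ge> 0" using a b by auto
    ultimately show ?thesis by auto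
  qed
  then have "3^p * m^p \<le> 3^p * (1 + a^p + b^p)" by (intro mult_left_mono) auto
  finally show ?thesis .
qed

lemma sq3:
  fixes a b :: real
  shows "(1 + a + b)^2 \<le> 3 * (1 + a^2 + b^2)"
proof -
  have "0 \<le> (1-a)^2 + (1-b)^2 + (a-b)^2" by simp
  moreover have "(1-a)^2 + (1-b)^2 + (a-b)^2 = 3 * (1 + a^2 + b^2) - (1 + a + b)^2"
    by (simp add: power2_eq_square algebra_simps)
  ultimately show ?thesis by linarith
qed

lemma max_comp:
  fixes xi :: "real^'n::finite"
  obtains i0 where "(norm xi)^2 \<le> real CARD('n) * (xi $ i0)^2"
proof -
  define M where "M = Max ((\<lambda>i. \<bar>xi $ i\<bar>) ` UNIV)"
  have "M \<in> (\<lambda>i. \<bar>xi $ i\<bar>) ` UNIV" unfolding M_def by (rule Max_in) auto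
  then obtain i0 where i0: "M = \<bar>xi $ i0\<bar>" by auto
  have le: "\<bar>xi $ i\<bar> \<le> \<bar>xi $ i0\<bar>" for i unfolding i0[symmetric] M_def by (rule Max_ge) auto
  have "(norm xi)^2 = (\<Sum>i\<in>UNIV. (xi $ i)^2)" by (rule norm_sq_vec)
  also have "\<dots> \<le> (\<Sum>i\<in>(UNIV::'n set). (xi $ i0)^2)"
  proof (rule sum_mono)
    fix i
    have "\<bar>xi $ i\<bar>^2 \<le> \<bar>xi $ i0\<bar>^2" using le[of i] by (intro power_mono) auto
    then show "(xi $ i)^2 \<le> (xi $ i0)^2" by simp
  qed
  also have "\<dots> = real CARD('n) * (xi $ i0)^2" by simp
  finally show ?thesis by (rule that)
qed

lemma powr_cancel:
  assumes k: "k > 0"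
  shows "k powr (- 2 * real j) * k^(2*j) = 1"
proof -
  have "k powr (real (2*j)) = k^(2*j)" using k by (rule powr_realpow)
  then have "k powr (- 2 * real j) = 1 / k^(2*j)"
    by (simp add: powr_minus divide_inverse)
  then show ?thesis using k by simp
qed

lemma finite_S: "finite {a::'n::finite \<Rightarrow> nat. mi_order a \<le> p}"
proof (rule finite_subset)
  show "{a::'n \<Rightarrow> nat. mi_order a \<le> p} \<subseteq> Pi\<^sub>E UNIV (\<lambda>_. {0..p})"
  proof
    fix a :: "'n \<Rightarrow> nat" assume "a \<in> {a. mi_order a \<le> p}"
    then have "mi_order a \<le> p" by simp
    moreover have "a i \<le> mi_order a" for i unfolding mi_order_def by (rule member_le_sum) auto
    ultimately have "\<forall>i. a i \<le> p" by (meson le_trans)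
    then show "a \<in> Pi\<^sub>E UNIV (\<lambda>_. {0..p})" by (auto simp: PiE_UNIV_domain)
  qed
  show "finite (Pi\<^sub>E (UNIV::'n set) (\<lambda>_. {0..p}))" by (rule finite_PiE) auto
qed

lemma L2_nonneg: "L2_norm_sq g \<ge> 0"
  unfolding L2_norm_sq_def by (rule integral_nonneg_AE) simp



theorem lemmaC1:
  fixes p :: nat
  assumes "p \<ge> 1"
  shows "\<exists>mu lam::real. mu > 0 \<and> lam > 0 \<and>
    (\<forall>(k::real) (m::int^'n::finite) (n::int^'n). k \<ge> 1 \<longrightarrow>
      mu * (1 + (norm (lattice_pt k m))\<^sup>2 + (norm (lattice_pt k n))\<^sup>2) ^ p
        \<le> Hhat_norm_sq p k (Psi k m n) \<and>
      Hhat_norm_sq p k (Psi k m n)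
        \<le> lam * (1 + (norm (lattice_pt k m))\<^sup>2 + (norm (lattice_pt k n))\<^sup>2) ^ p)"
proof -
  have p1: "p \<ge> 1" by (rule assms)
  define R where "R = 2 * Kc p + 1"
  define bt where "bt = beta TYPE('n)"
  define D where "D = 1 + 4^p + real CARD('n)^p * (4 + R^(2*p))"
  define mu where "mu = bt / (3^p * D)"
  define S where "S = {a::'n \<Rightarrow> nat. mi_order a \<le> p}"
  define lam where "lam = real (card S) * real (p+1) * Cup TYPE('n) p * 3^p + 1"
  have bt0: "bt > 0" unfolding bt_def by (rule beta_pos)
  have D0: "D > 0" unfolding D_def by (intro add_pos_nonneg) auto
  have finS: "finite S" unfolding S_def by (rule finite_S)
  have Cup0: "Cup TYPE('n) p \<ge> 0" by (rule Cup_nonneg)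
  have lam0: "lam > 0" unfolding lam_def using Cup0 by (intro add_nonneg_pos mult_nonneg_nonneg) auto
  have mu0: "mu > 0" unfolding mu_def using bt0 D0 by simp
  show ?thesis
  proof (rule exI[of _ mu], rule exI[of _ lam], intro conjI allI impI)
    show "mu > 0" by (rule mu0)
    show "lam > 0" by (rule lam0)
    fix k :: real and m n :: "int^'n"
    assume k: "k \<ge> 1"
    have k0: "k > 0" using k by simp
    define c where "c = lattice_pt k m"
    define xi where "xi = lattice_pt k n"
    define W where "W = 1 + norm c + norm xi"
    define Z where "Z = 1 + (norm c)\<^sup>2 + (norm xi)\<^sup>2"
    define t where "t a q = k powr (- 2 * real (mi_order a)) * L2_norm_sq (\<lambda>x. complex_of_real (norm x ^ q) * Fb k c xi a x)" for a q
    define H where "H = (\<Sum>a\<in>S. \<Sum>q\<in>{0..p - mi_order a}. t a q)"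
    have HH: "Hhat_norm_sq p k (Psi k m n) = H"
      unfolding Hhat_norm_sq_def H_def S_def t_def Psi_Fb[OF k0] mi_deriv_Fb c_def xi_def ..
    have tnn: "t a q \<ge> 0" for a q unfolding t_def by (intro mult_nonneg_nonneg L2_nonneg) simp
    have aS: "mi_order a \<le> p" if "a \<in> S" for a using that by (simp add: S_def)
    have intup: "(\<integral>\<^sup>+x. ennreal ((cmod (complex_of_real (norm x ^ q) * Fb k c xi a x))^2) \<partial>lborel)
        \<le> ennreal (k^(2 * mi_order a) * W^(2*p) * Cup TYPE('n) p)"
      if "mi_order a + q \<le> p" for a q
      unfolding W_def by (rule term_upper[OF k that])
    have Bnn: "k^(2 * mi_order a) * W^(2*p) * Cup TYPE('n) p \<ge> 0" for a
      unfolding W_def using k Cup0 by (intro mult_nonneg_nonneg) auto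
    have tup: "t a q \<le> W^(2*p) * Cup TYPE('n) p" if "mi_order a + q \<le> p" for a q
    proof -
      have "L2_norm_sq (\<lambda>x. complex_of_real (norm x ^ q) * Fb k c xi a x) \<le> k^(2 * mi_order a) * W^(2*p) * Cup TYPE('n) p"
        by (rule L2_upper[OF Fb_meas intup[OF that] Bnn])
      then have "t a q \<le> k powr (- 2 * real (mi_order a)) * (k^(2 * mi_order a) * W^(2*p) * Cup TYPE('n) p)"
        unfolding t_def by (intro mult_left_mono) auto
      also have "\<dots> = (k powr (- 2 * real (mi_order a)) * k^(2 * mi_order a)) * (W^(2*p) * Cup TYPE('n) p)"
        by (simp add: mult_ac)
      also have "\<dots> = W^(2*p) * Cup TYPE('n) p" unfolding powr_cancel[OF k0] by simp
      finally show ?thesis .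
    qed
    have tle: "t a q \<le> H" if "a \<in> S" "q \<in> {0..p - mi_order a}" for a q
    proof -
      have "t a q \<le> (\<Sum>q\<in>{0..p - mi_order a}. t a q)"
        by (rule member_le_sum[OF that(2)]) (auto simp: tnn)
      also have "\<dots> \<le> H" unfolding H_def
        by (rule member_le_sum[OF that(1)]) (auto intro!: sum_nonneg simp: tnn finS)
      finally show ?thesis .
    qed
    have H0: "H \<ge> 0" unfolding H_def by (intro sum_nonneg tnn)

    have "H \<le> (\<Sum>a\<in>S. \<Sum>q\<in>{0..p - mi_order a}. W^(2*p) * Cup TYPE('n) p)"
      unfolding H_def by (intro sum_mono tup) (auto dest: aS)
    also have "\<dots> \<le> (\<Sum>a\<in>S. real (p+1) * (W^(2*p) * Cup TYPE('n) p))"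
    proof (rule sum_mono)
      fix a assume "a \<in> S"
      have WC: "W^(2*p) * Cup TYPE('n) p \<ge> 0" unfolding W_def using Cup0 by simp
      have "(\<Sum>q\<in>{0..p - mi_order a}. W^(2*p) * Cup TYPE('n) p) = real (p - mi_order a + 1) * (W^(2*p) * Cup TYPE('n) p)"
        by simp
      also have "\<dots> \<le> real (p+1) * (W^(2*p) * Cup TYPE('n) p)"
        by (rule mult_right_mono[OF _ WC]) simp
      finally show "(\<Sum>q\<in>{0..p - mi_order a}. W^(2*p) * Cup TYPE('n) p) \<le> real (p+1) * (W^(2*p) * Cup TYPE('n) p)" .
    qed
    also have "\<dots> = real (card S) * real (p+1) * Cup TYPE('n) p * W^(2*p)" by (simp add: mult_ac)
    also have "\<dots> \<le> real (card S) * real (p+1) * Cup TYPE('n) p * (3^p * Z^p)"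
    proof (rule mult_left_mono)
      have "W^(2*p) = (W^2)^p" by (simp add: power_mult)
      also have "\<dots> \<le> (3 * Z)^p" unfolding W_def Z_def by (intro power_mono sq3) simp
      also have "\<dots> = 3^p * Z^p" by (simp add: power_mult_distrib)
      finally show "W^(2*p) \<le> 3^p * Z^p" .
    qed (use Cup0 in simp)
    also have "\<dots> \<le> lam * Z^p"
    proof -
      have "Z^p \<ge> 0" unfolding Z_def by simp
      then have "real (card S) * real (p+1) * Cup TYPE('n) p * (3^p * Z^p) + Z^p \<ge> real (card S) * real (p+1) * Cup TYPE('n) p * (3^p * Z^p)"
        by simp
      then show ?thesis by (simp add: lam_def algebra_simps)
    qed
    finally have upper: "H \<le> lam * Z^p" .

    have zS: "(\<lambda>_. 0::nat) \<in> S" by (simp add: S_def mi_order_def)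
    have t0: "bt \<le> t (\<lambda>_. 0) 0"
    proof -
      have "1 * bt \<le> L2_norm_sq (\<lambda>x. complex_of_real (norm x ^ 0) * Fb k c xi (\<lambda>_. 0) x)"
        unfolding bt_def
        by (rule L2_lower[OF Fb_meas intup lower0[OF k]]) (auto simp: mi_order_def less_imp_le beta_pos)
      then show ?thesis using k0 by (simp add: t_def mi_order_def)
    qed
    have H_bt: "bt \<le> H" using t0 tle[OF zS, of 0] by simp
    have tx: "((norm c / 2)^p)^2 * bt \<le> H" if c2: "norm c \<ge> 2"
    proof -
      have "((norm c / 2)^p)^2 * bt \<le> L2_norm_sq (\<lambda>x. complex_of_real (norm x ^ p) * Fb k c xi (\<lambda>_. 0) x)"
        unfolding bt_def
        by (rule L2_lower[OF Fb_meas intup lowerx[OF k c2]]) (auto simp: mi_order_def less_imp_le beta_pos)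
      then have "((norm c / 2)^p)^2 * bt \<le> t (\<lambda>_. 0) p" using k0 by (simp add: t_def mi_order_def)
      also have "\<dots> \<le> H" by (rule tle[OF zS]) (simp add: mi_order_def)
      finally show ?thesis .
    qed
    have ti: "(\<bar>xi $ i\<bar>^p / 2)^2 * bt \<le> H" if s: "\<bar>xi $ i\<bar> \<ge> R" for i
    proof -
      define a where "a = (\<lambda>j. if j = i then p else (0::nat))"
      have ma: "mi_order a = p" by (simp add: a_def mi_order_def)
      have aS': "a \<in> S" by (simp add: S_def ma)
      have "(k^p * \<bar>xi $ i\<bar>^p / 2)^2 * bt \<le> L2_norm_sq (\<lambda>x. complex_of_real (norm x ^ 0) * Fb k c xi a x)"
        unfolding bt_def a_def
        by (rule L2_lower[OF Fb_meas intup loweri[OF k p1 s[unfolded R_def]]])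
           (auto simp: a_def[symmetric] ma less_imp_le beta_pos)
      then have "k powr (- 2 * real p) * ((k^p * \<bar>xi $ i\<bar>^p / 2)^2 * bt) \<le> t a 0"
        unfolding t_def ma by (intro mult_left_mono) auto
      moreover have "k powr (- 2 * real p) * ((k^p * \<bar>xi $ i\<bar>^p / 2)^2 * bt) = (\<bar>xi $ i\<bar>^p / 2)^2 * bt"
      proof -
        have e1: "(k^p * \<bar>xi $ i\<bar>^p / 2)^2 = (k^p)^2 * (\<bar>xi $ i\<bar>^p / 2)^2"
          by (simp add: power_mult_distrib power_divide)
        have e2: "(k^p)^2 = k^(2*p)" by (metis power_mult mult.commute)
        have "(k^p * \<bar>xi $ i\<bar>^p / 2)^2 = k^(2*p) * (\<bar>xi $ i\<bar>^p / 2)^2"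
          unfolding e1 e2 ..
        then show ?thesis using powr_cancel[OF k0, of p] by (simp add: mult.assoc[symmetric])
      qed
      moreover have "t a 0 \<le> H" by (rule tle[OF aS']) (simp add: ma)
      ultimately show ?thesis by linarith
    qed
    have D1: "bt * (norm c)^(2*p) \<le> 4^p * H"
    proof (cases "norm c \<ge> 2")
      case True
      have e1: "((norm c / 2)^p)^2 = ((norm c)^p)^2 / ((2::real)^p)^2" by (simp add: power_divide)
      have e2: "((norm c)^p)^2 = (norm c)^(2*p)" by (metis power_mult mult.commute)
      have e3: "((2::real)^p)^2 = (2^2)^p" by (metis power_mult mult.commute)
      have eq: "((norm c / 2)^p)^2 = (norm c)^(2*p) / 4^p" unfolding e1 e2 e3 by simp
      have "(norm c)^(2*p) / 4^p * bt \<le> H" using tx[OF True] unfolding eq .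
      then have "((norm c)^(2*p) * bt) / 4^p \<le> H" by simp
      then have "(norm c)^(2*p) * bt \<le> H * 4^p" by (subst (asm) pos_divide_le_eq) auto
      then show ?thesis by (simp add: mult.commute)
    next
      case False
      have "(norm c)^(2*p) = ((norm c)^2)^p" by (simp add: power_mult)
      also have "\<dots> \<le> 4^p"
      proof (intro power_mono)
        have "(norm c)^2 \<le> 2^2" using False by (intro power_mono) auto
        then show "(norm c)^2 \<le> 4" by simp
      qed simp
      finally have "bt * (norm c)^(2*p) \<le> bt * 4^p" using bt0 by simp
      also have "\<dots> \<le> H * 4^p" using H_bt by simp
      finally show ?thesis by (simp add: mult.commute)
    qed
    have D2: "bt * ((xi $ i)^2)^p \<le> (4 + R^(2*p)) * H" for i
    proof (cases "\<bar>xi $ i\<bar> \<ge> R")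
      case True
      have e1: "(\<bar>xi $ i\<bar>^p / 2)^2 = (\<bar>xi $ i\<bar>^p)^2 / 4" by (simp add: power_divide)
      have e2: "(\<bar>xi $ i\<bar>^p)^2 = (\<bar>xi $ i\<bar>^2)^p" by (metis power_mult mult.commute)
      have "((xi $ i)^2)^p = 4 * (\<bar>xi $ i\<bar>^p / 2)^2" unfolding e1 e2 by simp
      then have "bt * ((xi $ i)^2)^p = 4 * ((\<bar>xi $ i\<bar>^p / 2)^2 * bt)" by simp
      also have "\<dots> \<le> 4 * H" using ti[OF True] by simp
      also have "\<dots> \<le> (4 + R^(2*p)) * H" using H0 by (intro mult_right_mono) auto
      finally show ?thesis .
    next
      case False
      have R0: "R \<ge> 0" unfolding R_def using Kc_nonneg[of p] by simp
      have "\<bar>xi $ i\<bar> \<le> \<bar>R\<bar>" using False R0 by simp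
      then have "(xi $ i)^2 \<le> R^2" by (simp add: abs_le_square_iff)
      then have "((xi $ i)^2)^p \<le> (R^2)^p" by (rule power_mono) simp
      then have "bt * ((xi $ i)^2)^p \<le> bt * R^(2*p)" using bt0 by (simp add: power_mult)
      also have "\<dots> \<le> H * R^(2*p)" using H_bt by (intro mult_right_mono) auto
      also have "\<dots> \<le> (4 + R^(2*p)) * H" using H0 by (simp add: algebra_simps)
      finally show ?thesis .
    qed
    obtain i0 where i0: "(norm xi)^2 \<le> real CARD('n) * (xi $ i0)^2" by (rule max_comp)
    have D3: "bt * ((norm xi)^2)^p \<le> real CARD('n)^p * (4 + R^(2*p)) * H"
    proof -
      have "((norm xi)^2)^p \<le> (real CARD('n) * (xi $ i0)^2)^p" using i0 by (intro power_mono) auto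
      also have "\<dots> = real CARD('n)^p * ((xi $ i0)^2)^p" by (simp add: power_mult_distrib)
      finally have "bt * ((norm xi)^2)^p \<le> bt * (real CARD('n)^p * ((xi $ i0)^2)^p)"
        using bt0 by simp
      also have "\<dots> = real CARD('n)^p * (bt * ((xi $ i0)^2)^p)" by (simp add: mult_ac)
      also have "\<dots> \<le> real CARD('n)^p * ((4 + R^(2*p)) * H)" by (intro mult_left_mono D2) auto
      finally show ?thesis by (simp add: mult_ac)
    qed
    have "mu * Z^p \<le> mu * (3^p * (1 + ((norm c)^2)^p + ((norm xi)^2)^p))"
      unfolding Z_def using mu0 by (intro mult_left_mono pow3) auto
    also have "\<dots> = (bt * (1 + ((norm c)^2)^p + ((norm xi)^2)^p)) / D"
      unfolding mu_def using D0 by (simp add: field_simps)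
    also have "\<dots> \<le> (H * D) / D"
    proof (rule divide_right_mono)
      have pc: "((norm c)^2)^p = (norm c)^(2*p)" by (simp add: power_mult)
      have "bt * (1 + ((norm c)^2)^p + ((norm xi)^2)^p) = bt + bt * (norm c)^(2*p) + bt * ((norm xi)^2)^p"
        unfolding pc by (simp add: algebra_simps)
      also have "\<dots> \<le> H + 4^p * H + real CARD('n)^p * (4 + R^(2*p)) * H"
        using H_bt D1 D3 by linarith
      also have "\<dots> = H * D" by (simp add: D_def algebra_simps)
      finally show "bt * (1 + ((norm c)^2)^p + ((norm xi)^2)^p) \<le> H * D" .
    qed (use D0 in simp)
    also have "\<dots> = H" using D0 by simp
    finally have lower: "mu * Z^p \<le> H" .
    show "mu * (1 + (norm (lattice_pt k m))\<^sup>2 + (norm (lattice_pt k n))\<^sup>2) ^ p \<le> Hhat_norm_sq p k (Psi k m n)"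
      using lower by (simp add: HH Z_def c_def xi_def)
    show "Hhat_norm_sq p k (Psi k m n) \<le> lam * (1 + (norm (lattice_pt k m))\<^sup>2 + (norm (lattice_pt k n))\<^sup>2) ^ p"
      using upper by (simp add: HH Z_def c_def xi_def)
  qed
qed


end
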